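(* For all integers $0 \le r \le m$ for which $H(r,m)$ is defined below, $H(r,m)$ is a generator matrix for the Reed–Muller code $\mathcal{R}(r,m)$ and hence a parity-check matrix for $\mathcal{R}(m-r-1,m)$.
   Context: All matrices are binary. The matrices $G(r,m)$, $0\le r\le m$, are defined recursively by $G(m,m) = I_{2^m}$ (identity), $G(0,m) = (11\cdots1)$ (all-ones row of length $2^m$), and for $0<r<m$, $$G(r,m) = \begin{pmatrix} G(r,m-1) & G(r,m-1) \\ \mathbf{0} & G(r-1,m-1)\end{pmatrix}.$$ The binary Reed–Muller code $\mathcal{R}(r,m)$ of order $r$ and length $2^m$ is the row space of $G(r,m)$; by convention $\mathcal{R}(-1,m)=\{\mathbf 0\}$, and $\mathcal{R}(r,m)^\perp = \mathcal{R}(m-r-1,m)$. A parity-check matrix for a code $\mathcal{C}$ is any matrix whose rows span $\mathcal{C}^\perp$. The matrices $H(r,m)$ are defined as follows: for all $m \ge 0$, $H(0,m) = (11\cdots1)$ (length $2^m$), $H(m-1,m) = G(m-1,m)$, $H(m,m) = I_{2^m}$; and for all positive integers $m$ and $r = 1,2,\ldots,m-2$, $$H(r,m) = \begin{pmatrix} H(r,m-1) & H(r,m-1) \\ \mathbf{0} & H(r-1,m-1) \\ H(r-1,m-1) & \mathbf{0}\end{pmatrix}.$$ *)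

theory Defs
  imports Main "HOL-Library.Z2"
begin

text \<open>Binary vectors are lists over the field GF(2) (type bit); a binary matrix is
  the list of its rows.\<close>

type_synonym bvec = "bit list"
type_synonym bmat = "bit list list"

definition vadd :: "bvec \<Rightarrow> bvec \<Rightarrow> bvec" where
  "vadd xs ys = map2 (+) xs ys"

definition idm :: "nat \<Rightarrow> bmat" where
  "idm n = map (\<lambda>i. map (\<lambda>j. if i = j then 1 else 0) [0..<n]) [0..<n]"

definition ones :: "nat \<Rightarrow> bvec" where
  "ones n = replicate n 1"

definition zeros :: "nat \<Rightarrow> bvec" where
  "zeros n = replicate n 0"

text \<open>Block matrix (A A; 0 B), where the zero block has width w.\<close>
definition blk2 :: "bmat \<Rightarrow> bmat \<Rightarrow> nat \<Rightarrow> bmat" where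
  "blk2 A B w = map (\<lambda>x. x @ x) A @ map (\<lambda>x. zeros w @ x) B"

text \<open>Block matrix (A A; 0 B; B 0), where the zero blocks have width w.\<close>
definition blk3 :: "bmat \<Rightarrow> bmat \<Rightarrow> nat \<Rightarrow> bmat" where
  "blk3 A B w = map (\<lambda>x. x @ x) A @ map (\<lambda>x. zeros w @ x) B @ map (\<lambda>x. x @ zeros w) B"

text \<open>G(r,m) for 0 \<le> r \<le> m (value for r > m is irrelevant).\<close>
fun G :: "nat \<Rightarrow> nat \<Rightarrow> bmat" where
  "G r 0 = (if r = 0 then idm 1 else [])"
| "G r (Suc m) =
     (if r = Suc m then idm (2 ^ Suc m)
      else if r = 0 then [ones (2 ^ Suc m)]
      else if r < Suc m then blk2 (G r m) (G (r - 1) m) (2 ^ m)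
      else [])"

fun H :: "nat \<Rightarrow> nat \<Rightarrow> bmat" where
  "H r 0 = (if r = 0 then [ones 1] else [])"
| "H r (Suc m) =
     (if r = Suc m then idm (2 ^ Suc m)
      else if r = 0 then [ones (2 ^ Suc m)]
      else if r = m then G m (Suc m)
      else if r < m then blk3 (H r m) (H (r - 1) m) (2 ^ m)
      else [])"

definition lincomb :: "nat \<Rightarrow> bit list \<Rightarrow> bmat \<Rightarrow> bvec" where
  "lincomb n c M = foldr (\<lambda>(a, row) acc. vadd (map ((*) a) row) acc) (zip c M) (zeros n)"

definition rowspace :: "nat \<Rightarrow> bmat \<Rightarrow> bvec set" where
  "rowspace n M = {lincomb n c M | c. length c = length M}"

definition dot :: "bvec \<Rightarrow> bvec \<Rightarrow> bit" where
  "dot v w = sum_list (map2 (*) v w)"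

definition dual :: "nat \<Rightarrow> bvec set \<Rightarrow> bvec set" where
  "dual n C = {v. length v = n \<and> (\<forall>w\<in>C. dot v w = 0)}"

definition RM :: "int \<Rightarrow> nat \<Rightarrow> bvec set" where
  "RM r m = (if r < 0 then {zeros (2 ^ m)} else rowspace (2 ^ m) (G (nat r) m))"

definition is_generator_matrix :: "nat \<Rightarrow> bmat \<Rightarrow> bvec set \<Rightarrow> bool" where
  "is_generator_matrix n M C \<longleftrightarrow> (\<forall>row\<in>set M. length row = n) \<and> rowspace n M = C"

definition is_parity_check_matrix :: "nat \<Rightarrow> bmat \<Rightarrow> bvec set \<Rightarrow> bool" where
  "is_parity_check_matrix n M C \<longleftrightarrow> (\<forall>row\<in>set M. length row = n) \<and> rowspace n M = dual n C"

end

theory Submission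
  imports Defs
begin


lemma bit_cases2: "(x::bit) = 0 \<or> x = 1"
  using bit_not_zero_iff by blast

lemma bit_add_self[simp]: "(x::bit) + x = 0"
  using bit_cases2[of x] by auto

lemma length_vadd[simp]: "length (vadd x y) = min (length x) (length y)"
  by (simp add: vadd_def)

lemma nth_vadd[simp]: "i < length x \<Longrightarrow> i < length y \<Longrightarrow> vadd x y ! i = x ! i + y ! i"
  by (simp add: vadd_def)

lemma length_zeros[simp]: "length (zeros n) = n" by (simp add: zeros_def)
lemma nth_zeros[simp]: "i < n \<Longrightarrow> zeros n ! i = 0" by (simp add: zeros_def)
lemma length_ones[simp]: "length (ones n) = n" by (simp add: ones_def)
lemma nth_ones[simp]: "i < n \<Longrightarrow> ones n ! i = 1" by (simp add: ones_def)

lemma vadd_assoc: "vadd (vadd x y) z = vadd x (vadd y z)"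
  by (rule nth_equalityI) (auto simp: add.assoc)

lemma vadd_comm: "vadd x y = vadd y x"
  by (rule nth_equalityI) (auto simp: add.commute)

lemma vadd_zeros_left: "length v \<le> n \<Longrightarrow> vadd (zeros n) v = v"
  by (rule nth_equalityI) auto

lemma vadd_zeros_right: "length v \<le> n \<Longrightarrow> vadd v (zeros n) = v"
  by (rule nth_equalityI) auto

lemma vadd_self: "vadd x x = zeros (length x)"
  by (rule nth_equalityI) auto

lemma vadd_append: "length a = length c \<Longrightarrow> vadd (a @ b) (c @ d) = vadd a c @ vadd b d"
  by (simp add: vadd_def)

lemma zeros_add: "zeros (a + b) = zeros a @ zeros b"
  by (simp add: zeros_def replicate_add)

lemma ones_add: "ones (a + b) = ones a @ ones b"
  by (simp add: ones_def replicate_add)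

lemma map_mult0: "map ((*) (0::bit)) x = zeros (length x)"
  by (rule nth_equalityI) auto

lemma map_mult1: "map ((*) (1::bit)) x = x"
  by (rule nth_equalityI) auto

lemma rs_Nil: "rowspace n [] = {zeros n}"
  by (simp add: rowspace_def lincomb_def)

lemma lincomb_Cons: "lincomb n (a # c) (x # M) = vadd (map ((*) a) x) (lincomb n c M)"
  by (simp add: lincomb_def)

lemma lincomb_len: "length (lincomb n c M) \<le> n"
proof (induction c arbitrary: M)
  case Nil then show ?case by (simp add: lincomb_def)
next
  case (Cons a c) then show ?case
    by (cases M) (auto simp: lincomb_def min_le_iff_disj)
qed

lemma rs_Cons_gen: "rowspace n (x # M) = {vadd (map ((*) a) x) v | a v. v \<in> rowspace n M}"
  unfolding rowspace_def
proof (safe, goal_cases)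
  case (1 _ c)
  then obtain a c' where "c = a # c'" by (cases c) auto
  with 1 show ?case by (auto simp: lincomb_Cons)
next
  case (2 _ a _ c)
  then show ?case by (intro exI[of _ "a # c"]) (auto simp: lincomb_Cons)
qed

lemma rs_len_le: "v \<in> rowspace n M \<Longrightarrow> length v \<le> n"
  unfolding rowspace_def using lincomb_len by auto

lemma rs_Cons: assumes "length x = n"
  shows "rowspace n (x # M) = rowspace n M \<union> vadd x ` rowspace n M"
proof -
  have z: "vadd (map ((*) 0) x) v = v" if "v \<in> rowspace n M" for v
    using that rs_len_le vadd_zeros_left assms unfolding map_mult0 by metis
  show ?thesis unfolding rs_Cons_gen
  proof (intro equalityI subsetI)
    fix w assume "w \<in> {vadd (map ((*) a) x) v |a v. v \<in> rowspace n M}"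
    then obtain a v where w: "w = vadd (map ((*) a) x) v" "v \<in> rowspace n M" by blast
    show "w \<in> rowspace n M \<union> vadd x ` rowspace n M"
      using bit_cases2[of a] w z map_mult1[of x] by (metis Un_iff image_eqI)
  next
    fix w assume "w \<in> rowspace n M \<union> vadd x ` rowspace n M"
    then show "w \<in> {vadd (map ((*) a) x) v |a v. v \<in> rowspace n M}"
    proof
      assume a: "w \<in> rowspace n M"
      have "w = vadd (map ((*) 0) x) w" using z[OF a] by simp
      then show ?thesis using a by blast
    next
      assume "w \<in> vadd x ` rowspace n M"
      then obtain v where "w = vadd x v" "v \<in> rowspace n M" by blast
      then show ?thesis using map_mult1[of x] by (metis (mono_tags, lifting) mem_Collect_eq)
    qed
  qed
qed



lemma rs_len: "v \<in> rowspace n M \<Longrightarrow> \<forall>r\<in>set M. length r = n \<Longrightarrow> length v = n"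
proof (induction M arbitrary: v)
  case Nil then show ?case by (simp add: rs_Nil)
next
  case (Cons x M) then show ?case by (auto simp: rs_Cons)
qed

lemma rs_map:
  assumes "\<forall>r\<in>set M. length r = n" "L (zeros n) = zeros n'"
    "\<And>x v. length x = n \<Longrightarrow> length v = n \<Longrightarrow> L (vadd x v) = vadd (L x) (L v)"
    "\<And>x. length x = n \<Longrightarrow> length (L x) = n'"
  shows "rowspace n' (map L M) = L ` rowspace n M"
  using assms(1)
proof (induction M)
  case Nil then show ?case by (simp add: rs_Nil assms(2))
next
  case (Cons x M)
  have lx: "length x = n" using Cons by simp
  have "rowspace n' (map L (x # M)) = rowspace n' (map L M) \<union> vadd (L x) ` rowspace n' (map L M)"
    using rs_Cons[of "L x" n' "map L M"] assms(4) lx by simp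
  also have "\<dots> = L ` rowspace n M \<union> vadd (L x) ` L ` rowspace n M" using Cons by simp
  also have "vadd (L x) ` L ` rowspace n M = L ` vadd x ` rowspace n M"
  proof -
    have "vadd (L x) (L v) = L (vadd x v)" if "v \<in> rowspace n M" for v
      using assms(3)[OF lx rs_len[OF that]] Cons by simp
    then show ?thesis by (auto simp: image_image intro!: image_cong)
  qed
  also have "L ` rowspace n M \<union> L ` vadd x ` rowspace n M = L ` rowspace n (x # M)"
    using rs_Cons[OF lx] by (simp add: image_Un)
  finally show ?case .
qed

lemma rs_append:
  assumes "\<forall>r\<in>set A. length r = n" "\<forall>r\<in>set B. length r = n"
  shows "rowspace n (A @ B) = {vadd p q | p q. p \<in> rowspace n A \<and> q \<in> rowspace n B}"
  using assms(1)
proof (induction A)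
  case Nil
  have "vadd (zeros n) y = y" if "y \<in> rowspace n B" for y
    using rs_len[OF that assms(2)] vadd_zeros_left by simp
  then show ?case by (force simp: rs_Nil)
next
  case (Cons x A)
  have lx: "length x = n" using Cons by simp
  have "rowspace n ((x # A) @ B) = rowspace n (A @ B) \<union> vadd x ` rowspace n (A @ B)"
    using rs_Cons[OF lx] by simp
  also have "\<dots> = {vadd p q | p q. p \<in> rowspace n (x # A) \<and> q \<in> rowspace n B}"
    unfolding Cons.IH[OF Cons.prems[simplified, THEN conjunct2]] rs_Cons[OF lx]
  proof (intro equalityI subsetI)
    fix w assume "w \<in> {vadd p q |p q. p \<in> rowspace n A \<and> q \<in> rowspace n B} \<union>
          vadd x ` {vadd p q |p q. p \<in> rowspace n A \<and> q \<in> rowspace n B}"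
    then show "w \<in> {vadd p q |p q. p \<in> rowspace n A \<union> vadd x ` rowspace n A \<and> q \<in> rowspace n B}"
    proof
      assume "w \<in> vadd x ` {vadd p q |p q. p \<in> rowspace n A \<and> q \<in> rowspace n B}"
      then obtain p q where "w = vadd (vadd x p) q" "p \<in> rowspace n A" "q \<in> rowspace n B"
        by (auto simp: vadd_assoc)
      then show ?thesis by blast
    qed blast
  next
    fix w assume "w \<in> {vadd p q |p q. p \<in> rowspace n A \<union> vadd x ` rowspace n A \<and> q \<in> rowspace n B}"
    then obtain p q where pq: "w = vadd p q" "p \<in> rowspace n A \<union> vadd x ` rowspace n A" "q \<in> rowspace n B"
      by blast
    from pq(2) show "w \<in> {vadd p q |p q. p \<in> rowspace n A \<and> q \<in> rowspace n B} \<union>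
          vadd x ` {vadd p q |p q. p \<in> rowspace n A \<and> q \<in> rowspace n B}"
    proof
      assume "p \<in> vadd x ` rowspace n A"
      then obtain p' where "p = vadd x p'" "p' \<in> rowspace n A" by blast
      then have "w = vadd x (vadd p' q)" using pq by (simp add: vadd_assoc)
      then show ?thesis using pq \<open>p' \<in> rowspace n A\<close> by blast
    qed (use pq in blast)
  qed
  finally show ?case .
qed



lemma idm_len: "r \<in> set (idm n) \<Longrightarrow> length r = n"
  by (auto simp: idm_def)

lemma length_idm[simp]: "length (idm n) = n" by (simp add: idm_def)
lemma length_idm_nth[simp]: "i < n \<Longrightarrow> length (idm n ! i) = n" by (simp add: idm_def)
lemma nth_idm: "i < n \<Longrightarrow> j < n \<Longrightarrow> idm n ! i ! j = (if i = j then 1 else 0)"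
  by (simp add: idm_def)

lemma idm_Suc: "idm (Suc n) = (1 # zeros n) # map ((#) 0) (idm n)"
proof (rule nth_equalityI)
  fix i assume i: "i < length (idm (Suc n))"
  then have i': "i < Suc n" by simp
  show "idm (Suc n) ! i = ((1 # zeros n) # map ((#) 0) (idm n)) ! i"
  proof (rule nth_equalityI)
    show "length (idm (Suc n) ! i) = length (((1 # zeros n) # map ((#) (0::bit)) (idm n)) ! i)"
      using i' by (cases i) auto
  next
    fix j assume "j < length (idm (Suc n) ! i)"
    then have j: "j < Suc n" using i' by simp
    show "idm (Suc n) ! i ! j = ((1 # zeros n) # map ((#) 0) (idm n)) ! i ! j"
      using i' j by (cases i; cases j) (auto simp: nth_idm simp del: upt_Suc)
  qed
qed simp

lemma rs_idm: "rowspace n (idm n) = {v. length v = n}"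
proof (induction n)
  case 0 then show ?case by (simp add: idm_def rs_Nil zeros_def)
next
  case (Suc n)
  have R: "rowspace (Suc n) (map ((#) 0) (idm n)) = (#) 0 ` rowspace n (idm n)"
    by (rule rs_map) (auto simp: idm_len zeros_def vadd_def)
  have "rowspace (Suc n) (idm (Suc n)) = (#) (0::bit) ` {v. length v = n} \<union> vadd (1 # zeros n) ` (#) 0 ` {v. length v = n}"
    unfolding idm_Suc by (subst rs_Cons) (auto simp: R Suc)
  also have "\<dots> = {v. length v = Suc n}"
  proof (intro equalityI subsetI)
    fix v :: bvec assume "v \<in> {v. length v = Suc n}"
    then obtain b w where v: "v = b # w" "length w = n" by (cases v) auto
    have "vadd (1 # zeros n) (0 # w) = 1 # w" using v vadd_zeros_left[of w n] by (simp add: vadd_def)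
    then show "v \<in> (#) (0::bit) ` {v. length v = n} \<union> vadd (1 # zeros n) ` (#) 0 ` {v. length v = n}"
      using v bit_cases2[of b] by (metis (mono_tags, lifting) Un_iff image_eqI mem_Collect_eq)
  qed (auto simp: vadd_def)
  finally show ?case .
qed

lemma rs_ones: "rowspace n [ones n] = {zeros n, ones n}"
  by (auto simp: rs_Cons rs_Nil vadd_zeros_right)

lemma set2_cong: "(\<And>a b. a \<in> A \<Longrightarrow> b \<in> B \<Longrightarrow> F a b = Q a b) \<Longrightarrow>
  {F a b | a b. a \<in> A \<and> b \<in> B} = {Q a b | a b. a \<in> A \<and> b \<in> B}"
  by auto metis+

lemma set3_cong: "(\<And>a b c. a \<in> A \<Longrightarrow> b \<in> B \<Longrightarrow> c \<in> C \<Longrightarrow> F a b c = Q a b c) \<Longrightarrow>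
  {F a b c | a b c. a \<in> A \<and> b \<in> B \<and> c \<in> C} = {Q a b c | a b c. a \<in> A \<and> b \<in> B \<and> c \<in> C}"
  by auto metis+

lemma img2: "{vadd p q |p q. p \<in> f ` A \<and> q \<in> g ` B} = {vadd (f a) (g b) |a b. a \<in> A \<and> b \<in> B}"
  by blast

lemma img3: "{vadd p q |p q. p \<in> f ` A \<and> q \<in> {vadd p q |p q. p \<in> g ` B \<and> q \<in> h ` C}} =
   {vadd (f a) (vadd (g b) (h c)) |a b c. a \<in> A \<and> b \<in> B \<and> c \<in> C}"
  by blast

definition cross :: "bvec set \<Rightarrow> bvec set \<Rightarrow> bvec set" where
  "cross C1 C2 = {u @ vadd u v | u v. u \<in> C1 \<and> v \<in> C2}"

lemma rs_dbl: assumes "\<forall>r\<in>set A. length r = w"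
  shows "rowspace (w + w) (map (\<lambda>x. x @ x) A) = (\<lambda>x. x @ x) ` rowspace w A"
  by (rule rs_map) (auto simp: assms zeros_add vadd_append)

lemma rs_zl: assumes "\<forall>r\<in>set A. length r = w"
  shows "rowspace (w + w) (map (\<lambda>x. zeros w @ x) A) = (\<lambda>x. zeros w @ x) ` rowspace w A"
  by (rule rs_map) (auto simp: assms zeros_add vadd_append vadd_zeros_left)

lemma rs_zr: assumes "\<forall>r\<in>set A. length r = w"
  shows "rowspace (w + w) (map (\<lambda>x. x @ zeros w) A) = (\<lambda>x. x @ zeros w) ` rowspace w A"
  by (rule rs_map) (auto simp: assms zeros_add vadd_append vadd_zeros_left)

lemma blk2_len: "\<forall>r\<in>set A. length r = w \<Longrightarrow> \<forall>r\<in>set B. length r = w \<Longrightarrow>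
  \<forall>r\<in>set (blk2 A B w). length r = w + w"
  by (auto simp: blk2_def)

lemma blk3_len: "\<forall>r\<in>set A. length r = w \<Longrightarrow> \<forall>r\<in>set B. length r = w \<Longrightarrow>
  \<forall>r\<in>set (blk3 A B w). length r = w + w"
  by (auto simp: blk3_def)

lemma rs_blk2: assumes A: "\<forall>r\<in>set A. length r = w" and B: "\<forall>r\<in>set B. length r = w"
  shows "rowspace (w + w) (blk2 A B w) = cross (rowspace w A) (rowspace w B)"
proof -
  have "rowspace (w + w) (blk2 A B w) =
    {vadd p q |p q. p \<in> (\<lambda>x. x @ x) ` rowspace w A \<and> q \<in> (\<lambda>x. zeros w @ x) ` rowspace w B}"
    unfolding blk2_def using A B by (subst rs_append) (auto simp: rs_dbl rs_zl)
  also have "\<dots> = cross (rowspace w A) (rowspace w B)"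
  proof -
    have *: "vadd (a @ a) (zeros w @ b) = a @ vadd a b" if "a \<in> rowspace w A" "b \<in> rowspace w B" for a b
      using rs_len[OF that(1) A] by (simp add: vadd_append vadd_zeros_right)
    show ?thesis unfolding cross_def img2 by (rule set2_cong[OF *])
  qed
  finally show ?thesis .
qed

lemma rs_blk3_raw: assumes A: "\<forall>r\<in>set A. length r = w" and B: "\<forall>r\<in>set B. length r = w"
  shows "rowspace (w + w) (blk3 A B w) =
    {vadd a c @ vadd a b | a b c. a \<in> rowspace w A \<and> b \<in> rowspace w B \<and> c \<in> rowspace w B}"
proof -
  have l1: "\<forall>r\<in>set (map (\<lambda>x. zeros w @ x) B @ map (\<lambda>x. x @ zeros w) B). length r = w + w"
    using B by auto
  have "rowspace (w + w) (blk3 A B w) =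
    {vadd p q |p q. p \<in> (\<lambda>x. x @ x) ` rowspace w A \<and>
      q \<in> {vadd p q |p q. p \<in> (\<lambda>x. zeros w @ x) ` rowspace w B \<and> q \<in> (\<lambda>x. x @ zeros w) ` rowspace w B}}"
    unfolding blk3_def using A B l1
    by (subst rs_append) (auto simp: rs_dbl rs_zl rs_zr rs_append)
  also have "\<dots> = {vadd a c @ vadd a b | a b c. a \<in> rowspace w A \<and> b \<in> rowspace w B \<and> c \<in> rowspace w B}"
  proof -
    have *: "vadd (a @ a) (vadd (zeros w @ b) (c @ zeros w)) = vadd a c @ vadd a b"
      if "a \<in> rowspace w A" "b \<in> rowspace w B" "c \<in> rowspace w B" for a b c
      using rs_len[OF that(1) A] rs_len[OF that(2) B] rs_len[OF that(3) B]
      by (simp add: vadd_append vadd_zeros_right vadd_zeros_left)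
    show ?thesis unfolding img3 by (rule set3_cong[OF *])
  qed
  finally show ?thesis .
qed



lemma dot_Nil[simp]: "dot [] v = 0" "dot v [] = 0" by (simp_all add: dot_def)
lemma dot_Cons[simp]: "dot (a # x) (b # y) = a * b + dot x y" by (simp add: dot_def)

lemma dot_append: "length a = length c \<Longrightarrow> dot (a @ b) (c @ d) = dot a c + dot b d"
  by (simp add: dot_def)

lemma dot_vadd_left: "length x = length y \<Longrightarrow> length z = length x \<Longrightarrow>
  dot (vadd x y) z = dot x z + dot y z"
proof (induction x arbitrary: y z)
  case Nil then show ?case by (simp add: vadd_def)
next
  case (Cons a x) then show ?case
    by (cases y; cases z) (auto simp: vadd_def algebra_simps)
qed

lemma dot_comm: "dot x y = dot y x"
proof (induction x arbitrary: y)
  case Nil then show ?case by simp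
next
  case (Cons a x) then show ?case by (cases y) (auto simp: mult.commute)
qed

lemma dot_vadd_right: "length x = length y \<Longrightarrow> length z = length x \<Longrightarrow>
  dot z (vadd x y) = dot z x + dot z y"
  using dot_vadd_left dot_comm by metis

lemma dot_zeros: "dot (zeros n) v = 0"
proof (induction n arbitrary: v)
  case 0 then show ?case by (simp add: zeros_def)
next
  case (Suc n) then show ?case by (cases v) (auto simp: zeros_def)
qed

lemma dot_zeros_r: "dot v (zeros n) = 0"
  using dot_zeros dot_comm by metis

lemma dual_cross:
  assumes L1: "\<And>v. v \<in> C1 \<Longrightarrow> length v = n" and L2: "\<And>v. v \<in> C2 \<Longrightarrow> length v = n"
    and z1: "zeros n \<in> C1" and z2: "zeros n \<in> C2" and sub: "C2 \<subseteq> C1"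
  shows "dual (n + n) (cross C1 C2) = cross (dual n C2) (dual n C1)"
proof (intro equalityI subsetI)
  fix x assume x: "x \<in> dual (n + n) (cross C1 C2)"
  define a where "a = take n x"
  define b where "b = drop n x"
  have lx: "length x = n + n" using x by (simp add: dual_def)
  have la: "length a = n" and lb: "length b = n" using lx by (auto simp: a_def b_def)
  have xab: "x = a @ b" by (simp add: a_def b_def)
  have key: "dot a u + dot b u + dot b v = 0" if "u \<in> C1" "v \<in> C2" for u v
  proof -
    have "u @ vadd u v \<in> cross C1 C2" using that by (auto simp: cross_def)
    then have 0: "dot x (u @ vadd u v) = 0" using x by (auto simp: dual_def)
    have "dot a u + dot b u + dot b v = dot x (u @ vadd u v)"
      using L1[OF that(1)] L2[OF that(2)] la lb
      by (simp only: xab dot_append dot_vadd_right add.assoc length_vadd min.idem)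
    then show ?thesis using 0 by simp
  qed
  have bd: "b \<in> dual n C2"
  proof -
    have "dot b v = 0" if "v \<in> C2" for v
      using key[OF z1 that] by (simp add: dot_zeros_r)
    then show ?thesis using lb by (simp add: dual_def)
  qed
  have abd: "vadd a b \<in> dual n C1"
  proof -
    have "dot (vadd a b) u = 0" if "u \<in> C1" for u
      using key[OF that z2] L1[OF that] la lb by (simp add: dot_zeros_r dot_vadd_left)
    then show ?thesis using la lb by (simp add: dual_def)
  qed
  have ad: "a \<in> dual n C2"
  proof -
    have "dot a v = 0" if "v \<in> C2" for v
    proof -
      have "a = vadd (vadd a b) b" using la lb by (simp add: vadd_assoc vadd_self vadd_zeros_right)
      then have "dot a v = dot (vadd a b) v + dot b v"
        using la lb L2[OF that] by (metis dot_vadd_left length_vadd min.idem)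
      then show ?thesis using abd bd that sub by (auto simp: dual_def)
    qed
    then show ?thesis using la by (simp add: dual_def)
  qed
  have "x = a @ vadd a (vadd a b)"
    using la lb by (simp add: xab vadd_assoc[symmetric] vadd_self vadd_zeros_left)
  then show "x \<in> cross (dual n C2) (dual n C1)" using ad abd by (auto simp: cross_def)
next
  fix x assume "x \<in> cross (dual n C2) (dual n C1)"
  then obtain p q where x: "x = p @ vadd p q" "p \<in> dual n C2" "q \<in> dual n C1"
    by (auto simp: cross_def)
  have lp: "length p = n" and lq: "length q = n" using x by (auto simp: dual_def)
  have "dot x w = 0" if "w \<in> cross C1 C2" for w
  proof -
    obtain u v where w: "w = u @ vadd u v" "u \<in> C1" "v \<in> C2" using \<open>w \<in> cross C1 C2\<close>
      by (auto simp: cross_def)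
    have lu: "length u = n" and lv: "length v = n" using w L1 L2 by auto
    have "dot x w = dot p u + ((dot p u + dot q u) + (dot p v + dot q v))"
      using lp lq lu lv by (simp only: x(1) w(1) dot_append dot_vadd_left dot_vadd_right length_vadd min.idem)
    also have "\<dots> = 0"
    proof -
      have "dot p v = 0" using x(2) w(3) by (auto simp: dual_def)
      moreover have "dot q u = 0" using x(3) w(2) by (auto simp: dual_def)
      moreover have "dot q v = 0" using x(3) w(3) sub by (auto simp: dual_def)
      ultimately show ?thesis by (simp flip: add.assoc)
    qed
    finally show ?thesis .
  qed
  moreover have "length x = n + n" using lp lq x by simp
  ultimately show "x \<in> dual (n + n) (cross C1 C2)" by (simp add: dual_def)
qed



fun C :: "int \<Rightarrow> nat \<Rightarrow> bvec set" where
  "C s 0 = (if s < 0 then {[0]} else {[0], [1]})"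
| "C s (Suc m) = cross (C s m) (C (s - 1) m)"

lemma pow_Suc2: "(2::nat) ^ Suc m = 2 ^ m + 2 ^ m" by simp

lemma C_len: "v \<in> C s m \<Longrightarrow> length v = 2 ^ m"
proof (induction m arbitrary: s v)
  case 0 then show ?case by (auto split: if_splits)
next
  case (Suc m)
  then obtain u w where "v = u @ vadd u w" "u \<in> C s m" "w \<in> C (s - 1) m" by (auto simp: cross_def)
  then show ?case using Suc.IH by (simp add: pow_Suc2)
qed

lemma C_zero: "zeros (2 ^ m) \<in> C s m"
proof (induction m arbitrary: s)
  case 0 then show ?case by (simp add: zeros_def)
next
  case (Suc m)
  have "zeros (2 ^ Suc m) = zeros (2 ^ m) @ vadd (zeros (2 ^ m)) (zeros (2 ^ m))"
    by (simp only: pow_Suc2 zeros_add vadd_self length_zeros)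
  then show ?case using Suc by (auto simp: cross_def)
qed

lemma C_neg: "s < 0 \<Longrightarrow> C s m = {zeros (2 ^ m)}"
proof (induction m arbitrary: s)
  case 0 then show ?case by (simp add: zeros_def)
next
  case (Suc m)
  have "zeros (2 ^ Suc m) = zeros (2 ^ m) @ vadd (zeros (2 ^ m)) (zeros (2 ^ m))"
    by (simp only: pow_Suc2 zeros_add vadd_self length_zeros)
  then show ?case using Suc by (auto simp: cross_def)
qed

lemma len1: "{v :: bvec. length v = 1} = {[0], [1]}"
proof (intro equalityI subsetI)
  fix v :: bvec assume "v \<in> {v. length v = 1}"
  then obtain b where "v = [b]" by (auto simp: length_Suc_conv)
  then show "v \<in> {[0], [1]}" using bit_cases2[of b] by auto
qed auto

lemma cross_full: "cross {v. length v = n} {v. length v = n} = {v. length v = n + n}"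
proof (intro equalityI subsetI)
  fix w :: bvec assume "w \<in> {v. length v = n + n}"
  then have l: "length w = n + n" by simp
  define a where "a = take n w"
  define b where "b = drop n w"
  have la: "length a = n" "length b = n" using l by (auto simp: a_def b_def)
  have "vadd a (vadd a b) = b"
    using la by (simp only: vadd_assoc[symmetric] vadd_self vadd_zeros_left order.refl)
  then have "w = a @ vadd a (vadd a b)" by (simp add: a_def b_def)
  then show "w \<in> cross {v. length v = n} {v. length v = n}" using la
    unfolding cross_def by (intro CollectI exI[of _ a] exI[of _ "vadd a b"]) auto
qed (auto simp: cross_def)

lemma C_full: "int m \<le> s \<Longrightarrow> C s m = {v. length v = 2 ^ m}"
proof (induction m arbitrary: s)
  case 0 then show ?case using len1 by simp
next
  case (Suc m)
  then have "C s m = {v. length v = 2 ^ m}" "C (s - 1) m = {v. length v = 2 ^ m}" by auto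
  then show ?case by (simp only: C.simps cross_full pow_Suc2)
qed

lemma C_0: "C 0 m = {zeros (2 ^ m), ones (2 ^ m)}"
proof (induction m)
  case 0 then show ?case by (simp add: zeros_def ones_def)
next
  case (Suc m)
  have z: "zeros (2 ^ Suc m) = zeros (2 ^ m) @ vadd (zeros (2 ^ m)) (zeros (2 ^ m))"
    by (simp only: pow_Suc2 zeros_add vadd_self length_zeros)
  have o: "ones (2 ^ Suc m) = ones (2 ^ m) @ vadd (ones (2 ^ m)) (zeros (2 ^ m))"
    by (simp only: pow_Suc2 ones_add vadd_zeros_right length_ones order.refl)
  have cr: "cross {a, b} {c} = {a @ vadd a c, b @ vadd b c}" for a b c
    by (auto simp: cross_def)
  have "C 0 (Suc m) = cross {zeros (2 ^ m), ones (2 ^ m)} {zeros (2 ^ m)}"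
    using Suc C_neg[of "-1" m] by simp
  also have "\<dots> = {zeros (2 ^ Suc m), ones (2 ^ Suc m)}"
    by (simp only: cr z[symmetric] o[symmetric])
  finally show ?case .
qed

lemma cross_mono: "A \<subseteq> A' \<Longrightarrow> B \<subseteq> B' \<Longrightarrow> cross A B \<subseteq> cross A' B'"
  by (auto simp: cross_def)

lemma C_mono: "s \<le> t \<Longrightarrow> C s m \<subseteq> C t m"
proof (induction m arbitrary: s t)
  case 0 then show ?case by auto
next
  case (Suc m) then show ?case by (simp add: cross_mono)
qed

lemma C_add: "x \<in> C s m \<Longrightarrow> y \<in> C s m \<Longrightarrow> vadd x y \<in> C s m"
proof (induction m arbitrary: s x y)
  case 0 then show ?case by (auto split: if_splits simp: vadd_def)
next
  case (Suc m)
  from Suc.prems obtain u v where x: "x = u @ vadd u v" "u \<in> C s m" "v \<in> C (s - 1) m"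
    by (auto simp: cross_def)
  from Suc.prems obtain u' v' where y: "y = u' @ vadd u' v'" "u' \<in> C s m" "v' \<in> C (s - 1) m"
    by (auto simp: cross_def)
  have l: "length u = length u'" "length v = length u" "length v' = length u" using x y C_len by auto
  have "vadd x y = vadd u u' @ vadd (vadd u u') (vadd v v')"
  proof -
    have "vadd (vadd u v) (vadd u' v') = vadd (vadd u u') (vadd v v')"
      by (rule nth_equalityI) (auto simp: ac_simps)
    then show ?thesis using l by (simp add: x(1) y(1) vadd_append)
  qed
  moreover have "vadd u u' \<in> C s m" "vadd v v' \<in> C (s - 1) m" using Suc.IH x y by auto
  ultimately show ?case unfolding C.simps cross_def by blast
qed

lemma C_dual: "dual (2 ^ m) (C s m) = C (int m - s - 1) m"
proof (induction m arbitrary: s)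
  case 0
  show ?case
  proof (cases "s < 0")
    case True
    have "dual 1 {[0]} = {v. length v = 1}"
    proof (intro equalityI subsetI)
      fix v :: bvec assume "v \<in> {v. length v = 1}"
      then obtain b where "v = [b]" by (auto simp: length_Suc_conv)
      then show "v \<in> dual 1 {[0]}" by (simp add: dual_def)
    qed (simp add: dual_def)
    then show ?thesis using True len1 by simp
  next
    case False
    have "dual 1 {[0], [1]} = {[0]}"
    proof (intro equalityI subsetI)
      fix v assume "v \<in> dual 1 {[0], [1]}"
      then have "length v = 1" "dot v [1] = 0" by (auto simp: dual_def)
      then show "v \<in> {[0]}" by (auto simp: length_Suc_conv)
    qed (auto simp: dual_def)
    then show ?thesis using False by simp
  qed
next
  case (Suc m)
  have "dual (2 ^ Suc m) (C s (Suc m)) = cross (dual (2 ^ m) (C (s - 1) m)) (dual (2 ^ m) (C s m))"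
    unfolding C.simps pow_Suc2
    by (rule dual_cross) (auto simp: C_len C_zero C_mono)
  also have "\<dots> = cross (C (int m - (s - 1) - 1) m) (C (int m - s - 1) m)"
    using Suc by simp
  also have "\<dots> = C (int (Suc m) - s - 1) (Suc m)"
  proof -
    have e1: "int m - (s - 1) - 1 = int (Suc m) - s - 1" by simp
    have e2: "int m - s - 1 = int (Suc m) - s - 1 - 1" by simp
    show ?thesis by (simp only: e1 e2 C.simps)
  qed
  finally show ?case .
qed



lemma G_thm: "r \<le> m \<Longrightarrow> (\<forall>row\<in>set (G r m). length row = 2 ^ m) \<and> rowspace (2 ^ m) (G r m) = C (int r) m"
proof (induction m arbitrary: r)
  case 0
  then show ?case using rs_idm[of 1] len1 by (auto simp: idm_len)
next
  case (Suc m)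
  show ?case
  proof (cases "r = Suc m")
    case True
    then show ?thesis using rs_idm[of "2 ^ Suc m"] C_full[of "Suc m" "int r"] by (auto simp: idm_len)
  next
    case F1: False
    show ?thesis
    proof (cases "r = 0")
      case True
      then show ?thesis using rs_ones[of "2 ^ Suc m"] C_0[of "Suc m"] by simp
    next
      case False
      with F1 Suc.prems have r: "0 < r" "r \<le> m" by auto
      have G: "G r (Suc m) = blk2 (G r m) (G (r - 1) m) (2 ^ m)" using r by simp
      have I1: "\<forall>row\<in>set (G r m). length row = 2 ^ m" "rowspace (2 ^ m) (G r m) = C (int r) m"
        using Suc.IH[of r] r by auto
      have I2: "\<forall>row\<in>set (G (r - 1) m). length row = 2 ^ m" "rowspace (2 ^ m) (G (r - 1) m) = C (int r - 1) m"
        using Suc.IH[of "r - 1"] r by (auto simp: of_nat_diff)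
      show ?thesis unfolding G pow_Suc2
        using rs_blk2[OF I1(1) I2(1)] blk2_len[OF I1(1) I2(1)] I1(2) I2(2) by simp
    qed
  qed
qed

lemma cross3:
  assumes sub: "Q \<subseteq> P" and addP: "\<And>x y. x \<in> P \<Longrightarrow> y \<in> P \<Longrightarrow> vadd x y \<in> P"
    and addQ: "\<And>x y. x \<in> Q \<Longrightarrow> y \<in> Q \<Longrightarrow> vadd x y \<in> Q"
    and z: "zeros n \<in> Q" and lP: "\<And>x. x \<in> P \<Longrightarrow> length x = n"
  shows "{vadd a c @ vadd a b | a b c. a \<in> P \<and> b \<in> Q \<and> c \<in> Q} = cross P Q"
proof (intro equalityI subsetI)
  fix x assume "x \<in> {vadd a c @ vadd a b | a b c. a \<in> P \<and> b \<in> Q \<and> c \<in> Q}"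
  then obtain a b c where x: "x = vadd a c @ vadd a b" "a \<in> P" "b \<in> Q" "c \<in> Q" by blast
  have l: "length a = n" "length b = n" "length c = n" using x sub lP by auto
  have "vadd (vadd a c) (vadd c b) = vadd a b"
    using l by (simp only: vadd_assoc) (simp only: vadd_assoc[symmetric] vadd_self vadd_zeros_left order.refl)
  moreover have "vadd a c \<in> P" using x sub addP by auto
  moreover have "vadd c b \<in> Q" using x addQ by auto
  ultimately show "x \<in> cross P Q" unfolding cross_def
    by (intro CollectI exI[of _ "vadd a c"] exI[of _ "vadd c b"]) (simp add: x(1))
next
  fix x assume "x \<in> cross P Q"
  then obtain u v where x: "x = u @ vadd u v" "u \<in> P" "v \<in> Q" by (auto simp: cross_def)
  have "vadd u (zeros n) = u" using lP[OF x(2)] vadd_zeros_right by simp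
  then have "x = vadd u (zeros n) @ vadd u v" using x by simp
  then show "x \<in> {vadd a c @ vadd a b | a b c. a \<in> P \<and> b \<in> Q \<and> c \<in> Q}" using x z by blast
qed

lemma H_thm: "r \<le> m \<Longrightarrow> (\<forall>row\<in>set (H r m). length row = 2 ^ m) \<and> rowspace (2 ^ m) (H r m) = C (int r) m"
proof (induction m arbitrary: r)
  case 0
  then show ?case using rs_ones[of 1] by (auto simp: zeros_def ones_def)
next
  case (Suc m)
  show ?case
  proof (cases "r = Suc m")
    case True
    then show ?thesis using rs_idm[of "2 ^ Suc m"] C_full[of "Suc m" "int r"] by (auto simp: idm_len)
  next
    case F1: False
    show ?thesis
    proof (cases "r = 0")
      case True
      then show ?thesis using rs_ones[of "2 ^ Suc m"] C_0[of "Suc m"] by simp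
    next
      case F2: False
      show ?thesis
      proof (cases "r = m")
        case True
        then show ?thesis using F1 F2 G_thm[of m "Suc m"] by simp
      next
        case False
        with F1 F2 Suc.prems have r: "0 < r" "r < m" by auto
        have Hr: "H r (Suc m) = blk3 (H r m) (H (r - 1) m) (2 ^ m)" using r by simp
        have I1: "\<forall>row\<in>set (H r m). length row = 2 ^ m" "rowspace (2 ^ m) (H r m) = C (int r) m"
          using Suc.IH[of r] r by auto
        have I2: "\<forall>row\<in>set (H (r - 1) m). length row = 2 ^ m" "rowspace (2 ^ m) (H (r - 1) m) = C (int r - 1) m"
          using Suc.IH[of "r - 1"] r by (auto simp: of_nat_diff)
        have c3: "{vadd a c @ vadd a b | a b c. a \<in> C (int r) m \<and> b \<in> C (int r - 1) m \<and> c \<in> C (int r - 1) m}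
           = cross (C (int r) m) (C (int r - 1) m)"
          by (rule cross3) (auto simp: C_mono C_add C_zero C_len)
        show ?thesis unfolding Hr pow_Suc2
          using rs_blk3_raw[OF I1(1) I2(1)] blk3_len[OF I1(1) I2(1)] I1(2) I2(2) c3 by simp
      qed
    qed
  qed
qed

theorem proposition10:
  fixes r m :: nat
  assumes "r \<le> m"
  shows "is_generator_matrix (2 ^ m) (H r m) (RM (int r) m) \<and>
         is_parity_check_matrix (2 ^ m) (H r m) (RM (int m - int r - 1) m)"
proof -
  have H: "\<forall>row\<in>set (H r m). length row = 2 ^ m" "rowspace (2 ^ m) (H r m) = C (int r) m"
    using H_thm[OF assms] by auto
  have R1: "RM (int r) m = C (int r) m"
    using G_thm[OF assms] by (simp add: RM_def)
  have R2: "RM (int m - int r - 1) m = C (int m - int r - 1) m"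
  proof (cases "int m - int r - 1 < 0")
    case True then show ?thesis by (simp add: RM_def C_neg)
  next
    case False
    then have "nat (int m - int r - 1) \<le> m" by simp
    from G_thm[OF this] False show ?thesis by (simp add: RM_def)
  qed
  have D: "dual (2 ^ m) (C (int m - int r - 1) m) = C (int r) m"
    using C_dual[of m "int m - int r - 1"] by simp
  show ?thesis unfolding is_generator_matrix_def is_parity_check_matrix_def R1 R2 D
    using H by simp
qed

end
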